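(* Let $G=(V,E)$ be an undirected weighted graph with vertex set $V$ of size $n$, where each edge $\{i,j\}$ carries a nonnegative weight $w_{ij}=w_{ji}$ (with $w_{ij}=0$ if there is no edge) and each vertex $i$ carries an attribute vector $x_i\in\mathbb{R}^d$. Define the normalized adjacency matrix $A$ by $$A_{ij}=\begin{cases}\dfrac{w_{ij}}{\sum_{i\le j} w_{ij}}, & i=j,\\[2mm] \dfrac{w_{ij}}{2\sum_{i\le j} w_{ij}}, & i\neq j,\end{cases}$$ and set $A_{i\cdot}=\sum_j A_{ij}$, $A_{\cdot j}=\sum_i A_{ij}$, and $d(x,y)=\|x-y\|$ (Euclidean norm). Let $(X,Y)$ be a pair of random vectors in $\mathbb{R}^d$ with joint distribution $$P(X=x,Y=y)=\sum_{\substack{i,j\in V\\ x_i=x,\ x_j=y}} A_{ij}.$$ Then the squared distance correlation of $X$ and $Y$, i.e. the squared vector assortativity $$r^2=\frac{\mathrm{dCov}^2(X,Y)}{\big(\mathrm{dCov}^2(X,X)\,\mathrm{dCov}^2(Y,Y)\big)^{1/2}},$$ equals $r^2=f_1/f_2$, where $$f_1=\sum_{i',j'}\sum_{i,j}A_{ij}A_{i'j'}\,d(x_i,x_{i'})\,d(x_j,x_{j'})-2\sum_{i,j}A_{ij}\Big(\sum_{i'}A_{i'\cdot}\,d(x_i,x_{i'})\Big)\Big(\sum_{j'}A_{\cdot j'}\,d(x_j,x_{j'})\Big)+\Big(\sum_{i,i'}A_{i\cdot}A_{i'\cdot}\,d(x_i,x_{i'})\Big)^2,$$ $$f_2=\s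um_{i,i'}A_{i\cdot}A_{i'\cdot}\,\big(d(x_i,x_{i'})\big)^2-2\sum_{i}A_{i\cdot}\Big(\sum_{i'}A_{i'\cdot}\,d(x_i,x_{i'})\Big)^2+\Big(\sum_{i,i'}A_{i\cdot}A_{i'\cdot}\,d(x_i,x_{i'})\Big)^2.$$
   Context: Distance covariance (in the form of Lyons): for random vectors $(X,Y)$ with marginal laws $\mu,\nu$ and finite first moments, let $(X',Y')$ be an independent copy of $(X,Y)$. Set $a_\mu(x)=E_{X'}\|x-X'\|$, $D(\mu)=E\|X-X'\|$, and $d_\mu(x,x')=\|x-x'\|-a_\mu(x)-a_\mu(x')+D(\mu)$, and similarly $a_\nu$, $D(\nu)$, $d_\nu$ for $Y$. Then $\mathrm{dCov}^2(X,Y)=E[d_\mu(X,X')\,d_\nu(Y,Y')]$, $\mathrm{dCov}^2(X,X)=E[d_\mu(X,X')^2]$, $\mathrm{dCov}^2(Y,Y)=E[d_\nu(Y,Y')^2]$. The distance correlation squared is $\mathrm{dCov}^2(X,Y)/(\mathrm{dCov}^2(X,X)\,\mathrm{dCov}^2(Y,Y))^{1/2}$ (defined when the denominator is positive). Note that the joint distribution of $(X,Y)$ is symmetric, so $X$ and $Y$ have the same marginal law, given by $P(X=x)=\sum_{i:\,x_i=x}A_{i\cdot}$. *)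

theory Defs
  imports "HOL-Probability.Probability"
begin

definition total_weight :: "nat \<Rightarrow> (nat \<Rightarrow> nat \<Rightarrow> real) \<Rightarrow> real" where
  "total_weight n w = (\<Sum>j<n. \<Sum>i\<in>{..j}. w i j)"

definition normA :: "nat \<Rightarrow> (nat \<Rightarrow> nat \<Rightarrow> real) \<Rightarrow> nat \<Rightarrow> nat \<Rightarrow> real" where
  "normA n w i j = (if i = j then w i j / total_weight n w
                    else w i j / (2 * total_weight n w))"

definition vertex_pair_pmf :: "nat \<Rightarrow> (nat \<Rightarrow> nat \<Rightarrow> real) \<Rightarrow> (nat \<times> nat) pmf" where
  "vertex_pair_pmf n w =
     embed_pmf (\<lambda>(i,j). if i < n \<and> j < n then normA n w i j else 0)"

definition attr_pmf :: "nat \<Rightarrow> (nat \<Rightarrow> nat \<Rightarrow> real) \<Rightarrow> (nat \<Rightarrow> 'a) \<Rightarrow> ('a \<times> 'a) pmf" where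
  "attr_pmf n w x = map_pmf (\<lambda>(i,j). (x i, x j)) (vertex_pair_pmf n w)"

text \<open>Squared distance covariance (Lyons' form) of a joint law M of (X,Y).\<close>
definition dcov2 :: "('a::real_normed_vector \<times> 'b::real_normed_vector) pmf \<Rightarrow> real" where
  "dcov2 M =
    (let \<mu> = map_pmf fst M; \<nu> = map_pmf snd M;
         a\<mu> = (\<lambda>x. measure_pmf.expectation \<mu> (\<lambda>x'. norm (x - x')));
         D\<mu> = measure_pmf.expectation \<mu> a\<mu>;
         d\<mu> = (\<lambda>x x'. norm (x - x') - a\<mu> x - a\<mu> x' + D\<mu>);
         a\<nu> = (\<lambda>y. measure_pmf.expectation \<nu> (\<lambda>y'. norm (y - y')));
         D\<nu> = measure_pmf.expectation \<nu> a\<nu>;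
         d\<nu> = (\<lambda>y y'. norm (y - y') - a\<nu> y - a\<nu> y' + D\<nu>)
     in measure_pmf.expectation (pair_pmf M M)
          (\<lambda>((x,y),(x',y')). d\<mu> x x' * d\<nu> y y'))"

definition dcor2 :: "('a::real_normed_vector \<times> 'b::real_normed_vector) pmf \<Rightarrow> real" where
  "dcor2 M = dcov2 M /
     sqrt (dcov2 (map_pmf (\<lambda>(x,y). (x,x)) M) * dcov2 (map_pmf (\<lambda>(x,y). (y,y)) M))"

end

theory Submission
  imports Defs
begin


lemma exp_fin:
  fixes f :: "'i \<Rightarrow> real"
  assumes "finite S" "set_pmf P \<subseteq> S"
  shows "measure_pmf.expectation P f = (\<Sum>p\<in>S. pmf P p * f p)"
  using assms by (subst integral_measure_pmf_real[where A=S]) (auto simp: mult.commute)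

lemma exp_fin2:
  fixes f :: "'i \<times> 'i \<Rightarrow> real"
  assumes "finite S" "set_pmf P \<subseteq> S"
  shows "measure_pmf.expectation (pair_pmf P P) f = (\<Sum>p\<in>S. \<Sum>q\<in>S. pmf P p * pmf P q * f (p,q))"
proof -
  have "measure_pmf.expectation (pair_pmf P P) f = (\<Sum>pq\<in>S\<times>S. pmf (pair_pmf P P) pq * f pq)"
    using assms by (intro exp_fin) auto
  also have "\<dots> = (\<Sum>p\<in>S. \<Sum>q\<in>S. pmf P p * pmf P q * f (p,q))"
    by (subst sum.cartesian_product) (rule sum.cong, auto simp: pmf_pair)
  finally show ?thesis .
qed

lemma dcov2_fin:
  fixes U :: "'i \<Rightarrow> 'a::real_normed_vector" and V :: "'i \<Rightarrow> 'b::real_normed_vector"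
  assumes "finite S" "set_pmf P \<subseteq> S"
  shows "dcov2 (map_pmf (\<lambda>p. (U p, V p)) P) =
    (let aU = (\<lambda>u. \<Sum>q\<in>S. pmf P q * norm (u - U q));
         DU = (\<Sum>p\<in>S. pmf P p * aU (U p));
         aV = (\<lambda>v. \<Sum>q\<in>S. pmf P q * norm (v - V q));
         DV = (\<Sum>p\<in>S. pmf P p * aV (V p))
     in (\<Sum>p\<in>S. \<Sum>q\<in>S. pmf P p * pmf P q *
           ((norm (U p - U q) - aU (U p) - aU (U q) + DU) *
            (norm (V p - V q) - aV (V p) - aV (V q) + DV))))"
proof -
  have pp: "pair_pmf (map_pmf (\<lambda>p. (U p, V p)) P) (map_pmf (\<lambda>p. (U p, V p)) P)
     = map_pmf (\<lambda>(a, b). ((U a, V a), (U b, V b))) (pair_pmf P P)"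
    by (simp add: map_pair)
  show ?thesis
    unfolding dcov2_def Let_def pp
    by (simp add: map_pmf_comp exp_fin[OF assms] exp_fin2[OF assms] case_prod_beta)
qed

lemma center:
  fixes U :: "'i \<Rightarrow> 'a::real_normed_vector"
  assumes "finite S" "sum \<pi> S = 1"
  defines "a \<equiv> \<lambda>u. \<Sum>q\<in>S. \<pi> q * norm (u - U q)"
  defines "D \<equiv> \<Sum>p\<in>S. \<pi> p * a (U p)"
  shows "(\<Sum>q\<in>S. \<pi> q * (norm (U p - U q) - a (U p) - a (U q) + D)) = 0"
proof -
  have "(\<Sum>q\<in>S. \<pi> q * (norm (U p - U q) - a (U p) - a (U q) + D))
     = (\<Sum>q\<in>S. \<pi> q * norm (U p - U q)) - a (U p) * sum \<pi> S - (\<Sum>q\<in>S. \<pi> q * a (U q)) + D * sum \<pi> S"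
    by (simp add: algebra_simps sum.distrib sum_subtractf sum_distrib_left sum_distrib_right)
  also have "\<dots> = 0" using assms(2) by (simp add: a_def D_def)
  finally show ?thesis .
qed



lemma sum4:
  "(\<Sum>p\<in>S. \<Sum>q\<in>T. (f1 p q - f2 p q - f3 p q + f4 p q :: real))
   = (\<Sum>p\<in>S. \<Sum>q\<in>T. f1 p q) - (\<Sum>p\<in>S. \<Sum>q\<in>T. f2 p q) - (\<Sum>p\<in>S. \<Sum>q\<in>T. f3 p q) + (\<Sum>p\<in>S. \<Sum>q\<in>T. f4 p q)"
  by (simp add: sum.distrib sum_subtractf)

lemma dcov_alg:
  fixes U :: "'i \<Rightarrow> 'a::real_normed_vector" and V :: "'i \<Rightarrow> 'b::real_normed_vector"
  assumes fin: "finite S" and s1: "sum \<pi> S = 1"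
  defines "aU \<equiv> \<lambda>u. \<Sum>q\<in>S. \<pi> q * norm (u - U q)"
  defines "DU \<equiv> \<Sum>p\<in>S. \<pi> p * aU (U p)"
  defines "aV \<equiv> \<lambda>v. \<Sum>q\<in>S. \<pi> q * norm (v - V q)"
  defines "DV \<equiv> \<Sum>p\<in>S. \<pi> p * aV (V p)"
  shows "(\<Sum>p\<in>S. \<Sum>q\<in>S. \<pi> p * \<pi> q *
           ((norm (U p - U q) - aU (U p) - aU (U q) + DU) *
            (norm (V p - V q) - aV (V p) - aV (V q) + DV)))
       = (\<Sum>p\<in>S. \<Sum>q\<in>S. \<pi> p * \<pi> q * norm (U p - U q) * norm (V p - V q))
         - 2 * (\<Sum>p\<in>S. \<pi> p * aU (U p) * aV (V p)) + DU * DV"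
proof -
  define dU where "dU = (\<lambda>p q. norm (U p - U q) - aU (U p) - aU (U q) + DU)"
  have z1: "(\<Sum>q\<in>S. \<pi> q * dU p q) = 0" for p
    unfolding dU_def aU_def DU_def by (rule center[OF fin s1])
  have dUs: "dU p q = dU q p" for p q
    unfolding dU_def by (simp add: norm_minus_commute)
  have z2: "(\<Sum>p\<in>S. \<pi> p * dU p q) = 0" for q
    using z1[of q] by (simp add: dUs)
  have "(\<Sum>p\<in>S. \<Sum>q\<in>S. \<pi> p * \<pi> q * (dU p q * (norm (V p - V q) - aV (V p) - aV (V q) + DV)))
     = (\<Sum>p\<in>S. \<Sum>q\<in>S. \<pi> p * \<pi> q * dU p q * norm (V p - V q) - \<pi> p * \<pi> q * dU p q * aV (V p)
           - \<pi> p * \<pi> q * dU p q * aV (V q) + \<pi> p * \<pi> q * dU p q * DV)"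
    by (intro sum.cong refl) (simp add: algebra_simps)
  also have "\<dots> = (\<Sum>p\<in>S. \<Sum>q\<in>S. \<pi> p * \<pi> q * dU p q * norm (V p - V q))"
  proof -
    have "(\<Sum>p\<in>S. \<Sum>q\<in>S. \<pi> p * \<pi> q * dU p q * aV (V p)) = (\<Sum>p\<in>S. \<pi> p * aV (V p) * (\<Sum>q\<in>S. \<pi> q * dU p q))"
      by (simp add: sum_distrib_left mult_ac)
    then have a: "(\<Sum>p\<in>S. \<Sum>q\<in>S. \<pi> p * \<pi> q * dU p q * aV (V p)) = 0" using z1 by simp
    have "(\<Sum>p\<in>S. \<Sum>q\<in>S. \<pi> p * \<pi> q * dU p q * aV (V q)) = (\<Sum>q\<in>S. \<Sum>p\<in>S. \<pi> p * \<pi> q * dU p q * aV (V q))"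
      by (rule sum.swap)
    also have "\<dots> = (\<Sum>q\<in>S. \<pi> q * aV (V q) * (\<Sum>p\<in>S. \<pi> p * dU p q))"
      by (simp add: sum_distrib_left mult_ac)
    also have "\<dots> = 0" using z2 by simp
    finally have b: "(\<Sum>p\<in>S. \<Sum>q\<in>S. \<pi> p * \<pi> q * dU p q * aV (V q)) = 0" .
    have "(\<Sum>p\<in>S. \<Sum>q\<in>S. \<pi> p * \<pi> q * dU p q * DV) = (\<Sum>p\<in>S. \<pi> p * DV * (\<Sum>q\<in>S. \<pi> q * dU p q))"
      by (simp add: sum_distrib_left mult_ac)
    then have c: "(\<Sum>p\<in>S. \<Sum>q\<in>S. \<pi> p * \<pi> q * dU p q * DV) = 0" using z1 by simp
    show ?thesis unfolding sum4 a b c by simp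
  qed
  also have "\<dots> = (\<Sum>p\<in>S. \<Sum>q\<in>S. \<pi> p * \<pi> q * norm (U p - U q) * norm (V p - V q)
         - \<pi> p * \<pi> q * aU (U p) * norm (V p - V q) - \<pi> p * \<pi> q * aU (U q) * norm (V p - V q)
         + \<pi> p * \<pi> q * DU * norm (V p - V q))"
    unfolding dU_def by (intro sum.cong refl) (simp add: algebra_simps)
  also have "\<dots> = (\<Sum>p\<in>S. \<Sum>q\<in>S. \<pi> p * \<pi> q * norm (U p - U q) * norm (V p - V q))
         - 2 * (\<Sum>p\<in>S. \<pi> p * aU (U p) * aV (V p)) + DU * DV"
  proof -
    have a: "(\<Sum>p\<in>S. \<Sum>q\<in>S. \<pi> p * \<pi> q * aU (U p) * norm (V p - V q)) = (\<Sum>p\<in>S. \<pi> p * aU (U p) * aV (V p))"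
      unfolding aV_def by (simp add: sum_distrib_left mult_ac)
    have "(\<Sum>p\<in>S. \<Sum>q\<in>S. \<pi> p * \<pi> q * aU (U q) * norm (V p - V q)) = (\<Sum>q\<in>S. \<Sum>p\<in>S. \<pi> p * \<pi> q * aU (U q) * norm (V p - V q))"
      by (rule sum.swap)
    also have "\<dots> = (\<Sum>q\<in>S. \<Sum>p\<in>S. \<pi> p * \<pi> q * aU (U q) * norm (V q - V p))"
      by (intro sum.cong refl) (simp add: norm_minus_commute)
    also have "\<dots> = (\<Sum>p\<in>S. \<pi> p * aU (U p) * aV (V p))"
      unfolding aV_def by (simp add: sum_distrib_left mult_ac)
    finally have b: "(\<Sum>p\<in>S. \<Sum>q\<in>S. \<pi> p * \<pi> q * aU (U q) * norm (V p - V q)) = (\<Sum>p\<in>S. \<pi> p * aU (U p) * aV (V p))" .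
    have c: "(\<Sum>p\<in>S. \<Sum>q\<in>S. \<pi> p * \<pi> q * DU * norm (V p - V q)) = DU * DV"
      unfolding DV_def aV_def by (simp add: sum_distrib_left mult_ac)
    show ?thesis unfolding sum4 a b c by simp
  qed
  finally show ?thesis unfolding dU_def by (simp add: mult.assoc)
qed



lemma sumB:
  fixes w :: "nat \<Rightarrow> nat \<Rightarrow> real"
  assumes sym: "\<And>i j. i < n \<Longrightarrow> j < n \<Longrightarrow> w i j = w j i"
  shows "m \<le> n \<Longrightarrow> (\<Sum>i<m. \<Sum>j<m. if i = j then 2 * w i j else w i j) = 2 * (\<Sum>j<m. \<Sum>i\<in>{..j}. w i j)"
proof (induction m)
  case 0
  then show ?case by simp
next
  case (Suc m)
  have h1: "(\<Sum>i<m. if i = m then 2 * w i m else w i m) = (\<Sum>i<m. w i m)"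
    by (intro sum.cong) auto
  have h2: "(\<Sum>j<m. if m = j then 2 * w m j else w m j) = (\<Sum>j<m. w j m)"
    using Suc.prems by (intro sum.cong) (auto intro: sym)
  have h3: "(\<Sum>i\<in>{..m}. w i m) = (\<Sum>i<m. w i m) + w m m"
    by (simp add: lessThan_Suc_atMost[symmetric])
  show ?case using Suc h1 h2 h3 by (simp add: sum.distrib algebra_simps)
qed

lemma sumA:
  fixes w :: "nat \<Rightarrow> nat \<Rightarrow> real"
  assumes sym: "\<And>i j. i < n \<Longrightarrow> j < n \<Longrightarrow> w i j = w j i"
      and pos: "total_weight n w > 0"
  shows "(\<Sum>i<n. \<Sum>j<n. normA n w i j) = 1"
proof -
  have "(\<Sum>i<n. \<Sum>j<n. normA n w i j) = (\<Sum>i<n. \<Sum>j<n. (if i = j then 2 * w i j else w i j) / (2 * total_weight n w))"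
    unfolding normA_def using pos by (intro sum.cong refl) auto
  also have "\<dots> = (\<Sum>i<n. \<Sum>j<n. (if i = j then 2 * w i j else w i j)) / (2 * total_weight n w)"
    by (simp add: sum_divide_distrib)
  also have "\<dots> = 1" using sumB[OF sym, of n] pos by (simp add: total_weight_def)
  finally show ?thesis .
qed

lemma pmf_vp:
  fixes w :: "nat \<Rightarrow> nat \<Rightarrow> real"
  assumes nonneg: "\<And>i j. i < n \<Longrightarrow> j < n \<Longrightarrow> w i j \<ge> 0"
      and sym: "\<And>i j. i < n \<Longrightarrow> j < n \<Longrightarrow> w i j = w j i"
      and pos: "total_weight n w > 0"
  shows "pmf (vertex_pair_pmf n w) (i, j) = (if i < n \<and> j < n then normA n w i j else 0)"
proof -
  define f where "f = (\<lambda>(i,j). if i < n \<and> j < n then normA n w i j else (0::real))"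
  have nn: "0 \<le> f p" for p
    using nonneg pos by (auto simp: f_def normA_def split: prod.splits)
  have "(\<integral>\<^sup>+p. ennreal (f p) \<partial>count_space UNIV) = (\<Sum>p\<in>{..<n}\<times>{..<n}. ennreal (f p))"
    by (rule nn_integral_count_space') (auto simp: f_def split: if_splits)
  also have "\<dots> = ennreal (\<Sum>p\<in>{..<n}\<times>{..<n}. f p)"
    using nn by (simp add: sum_ennreal)
  also have "(\<Sum>p\<in>{..<n}\<times>{..<n}. f p) = (\<Sum>i<n. \<Sum>j<n. normA n w i j)"
    unfolding sum.cartesian_product by (auto simp: f_def intro!: sum.cong)
  also have "\<dots> = 1" by (rule sumA[OF sym pos])
  finally have one: "(\<integral>\<^sup>+p. ennreal (f p) \<partial>count_space UNIV) = 1" by simp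
  show ?thesis
    unfolding vertex_pair_pmf_def f_def[symmetric]
    using pmf_embed_pmf[OF nn one] by (simp add: f_def)
qed



lemma dcov2_self_nonneg:
  fixes U :: "'i \<Rightarrow> 'a::real_normed_vector"
  assumes "finite S" "set_pmf P \<subseteq> S"
  shows "dcov2 (map_pmf (\<lambda>p. (U p, U p)) P) \<ge> 0"
  unfolding dcov2_fin[OF assms] Let_def
  by (intro sum_nonneg) (simp add: mult_nonneg_nonneg)

lemma sum_reorder4:
  "(\<Sum>i\<in>I. \<Sum>j\<in>J. \<Sum>i'\<in>I'. \<Sum>j'\<in>J'. (F i j i' j' :: real))
   = (\<Sum>i'\<in>I'. \<Sum>j'\<in>J'. \<Sum>i\<in>I. \<Sum>j\<in>J. F i j i' j')"
proof -
  have "(\<Sum>i\<in>I. \<Sum>j\<in>J. \<Sum>i'\<in>I'. \<Sum>j'\<in>J'. F i j i' j') = (\<Sum>i\<in>I. \<Sum>i'\<in>I'. \<Sum>j\<in>J. \<Sum>j'\<in>J'. F i j i' j')"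
    by (intro sum.cong refl) (rule sum.swap)
  also have "\<dots> = (\<Sum>i'\<in>I'. \<Sum>i\<in>I. \<Sum>j\<in>J. \<Sum>j'\<in>J'. F i j i' j')" by (rule sum.swap)
  also have "\<dots> = (\<Sum>i'\<in>I'. \<Sum>i\<in>I. \<Sum>j'\<in>J'. \<Sum>j\<in>J. F i j i' j')"
    by (intro sum.cong refl) (rule sum.swap)
  also have "\<dots> = (\<Sum>i'\<in>I'. \<Sum>j'\<in>J'. \<Sum>i\<in>I. \<Sum>j\<in>J. F i j i' j')"
    by (intro sum.cong refl) (rule sum.swap)
  finally show ?thesis .
qed

theorem mainTheorem1:
  fixes n :: nat and w :: "nat \<Rightarrow> nat \<Rightarrow> real" and x :: "nat \<Rightarrow> real ^ 'd"
  assumes nonneg: "\<And>i j. i < n \<Longrightarrow> j < n \<Longrightarrow> w i j \<ge> 0"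
      and sym: "\<And>i j. i < n \<Longrightarrow> j < n \<Longrightarrow> w i j = w j i"
      and pos: "total_weight n w > 0"
  shows "dcor2 (attr_pmf n w x) =
    (let A = normA n w;
         Ar = (\<lambda>i. \<Sum>j<n. A i j);
         Ac = (\<lambda>j. \<Sum>i<n. A i j);
         d = (\<lambda>i i'. norm (x i - x i'));
         f1 = (\<Sum>i'<n. \<Sum>j'<n. \<Sum>i<n. \<Sum>j<n. A i j * A i' j' * d i i' * d j j')
              - 2 * (\<Sum>i<n. \<Sum>j<n. A i j * (\<Sum>i'<n. Ar i' * d i i') * (\<Sum>j'<n. Ac j' * d j j'))
              + (\<Sum>i<n. \<Sum>i'<n. Ar i * Ar i' * d i i')\<^sup>2;
         f2 = (\<Sum>i<n. \<Sum>i'<n. Ar i * Ar i' * (d i i')\<^sup>2)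
              - 2 * (\<Sum>i<n. Ar i * (\<Sum>i'<n. Ar i' * d i i')\<^sup>2)
              + (\<Sum>i<n. \<Sum>i'<n. Ar i * Ar i' * d i i')\<^sup>2
     in f1 / f2)"
proof -
  define A where "A = normA n w"
  define Ar where "Ar = (\<lambda>i. \<Sum>j<n. A i j)"
  define Ac where "Ac = (\<lambda>j. \<Sum>i<n. A i j)"
  define d where "d = (\<lambda>i i'. norm (x i - x i'))"
  define P where "P = vertex_pair_pmf n w"
  define S where "S = {..<n} \<times> {..<n}"
  have finS: "finite S" by (simp add: S_def)
  have pmfP: "pmf P p = (if fst p < n \<and> snd p < n then A (fst p) (snd p) else 0)" for p
    using pmf_vp[OF nonneg sym pos, of "fst p" "snd p"] by (simp add: P_def A_def)
  have setP: "set_pmf P \<subseteq> S"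
    by (auto simp: set_pmf_eq pmfP S_def split: if_splits)
  have Asym: "A i j = A j i" if "i < n" "j < n" for i j
    using sym[OF that] by (simp add: A_def normA_def)
  have AcAr: "Ac j = Ar j" if "j < n" for j
    unfolding Ac_def Ar_def using that by (intro sum.cong refl) (simp add: Asym)
  have L0: "(\<Sum>p\<in>S. pmf P p * g p) = (\<Sum>i<n. \<Sum>j<n. A i j * g (i,j))" for g :: "nat \<times> nat \<Rightarrow> real"
    unfolding S_def sum.cartesian_product by (intro sum.cong refl) (auto simp: pmfP)
  have sum1: "sum (pmf P) S = 1"
    using L0[of "\<lambda>_. 1"] sumA[OF sym pos] by (simp add: A_def)
  have L1: "(\<Sum>p\<in>S. pmf P p * g (fst p)) = (\<Sum>i<n. Ar i * g i)" for g :: "nat \<Rightarrow> real"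
    unfolding L0 Ar_def by (simp add: sum_distrib_right)
  have L2: "(\<Sum>p\<in>S. pmf P p * g (snd p)) = (\<Sum>i<n. Ar i * g i)" for g :: "nat \<Rightarrow> real"
  proof -
    have "(\<Sum>p\<in>S. pmf P p * g (snd p)) = (\<Sum>i<n. \<Sum>j<n. A i j * g j)" unfolding L0 by simp
    also have "\<dots> = (\<Sum>j<n. \<Sum>i<n. A i j * g j)" by (rule sum.swap)
    also have "\<dots> = (\<Sum>j<n. Ac j * g j)" by (simp add: Ac_def sum_distrib_right)
    also have "\<dots> = (\<Sum>j<n. Ar j * g j)" by (intro sum.cong refl) (simp add: AcAr)
    finally show ?thesis .
  qed
  have LL1: "(\<Sum>p\<in>S. \<Sum>q\<in>S. pmf P p * pmf P q * h (fst p) (fst q)) = (\<Sum>i<n. \<Sum>i'<n. Ar i * Ar i' * h i i')"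
    for h :: "nat \<Rightarrow> nat \<Rightarrow> real"
  proof -
    have "(\<Sum>p\<in>S. \<Sum>q\<in>S. pmf P p * pmf P q * h (fst p) (fst q))
        = (\<Sum>p\<in>S. pmf P p * (\<Sum>q\<in>S. pmf P q * h (fst p) (fst q)))"
      by (simp add: sum_distrib_left mult.assoc)
    also have "\<dots> = (\<Sum>p\<in>S. pmf P p * (\<Sum>i'<n. Ar i' * h (fst p) i'))" by (simp add: L1)
    also have "\<dots> = (\<Sum>i<n. Ar i * (\<Sum>i'<n. Ar i' * h i i'))" by (rule L1)
    finally show ?thesis by (simp add: sum_distrib_left mult.assoc)
  qed
  have LL2: "(\<Sum>p\<in>S. \<Sum>q\<in>S. pmf P p * pmf P q * h (snd p) (snd q)) = (\<Sum>i<n. \<Sum>i'<n. Ar i * Ar i' * h i i')"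
    for h :: "nat \<Rightarrow> nat \<Rightarrow> real"
  proof -
    have "(\<Sum>p\<in>S. \<Sum>q\<in>S. pmf P p * pmf P q * h (snd p) (snd q))
        = (\<Sum>p\<in>S. pmf P p * (\<Sum>q\<in>S. pmf P q * h (snd p) (snd q)))"
      by (simp add: sum_distrib_left mult.assoc)
    also have "\<dots> = (\<Sum>p\<in>S. pmf P p * (\<Sum>i'<n. Ar i' * h (snd p) i'))" by (simp add: L2)
    also have "\<dots> = (\<Sum>i<n. Ar i * (\<Sum>i'<n. Ar i' * h i i'))" by (rule L2)
    finally show ?thesis by (simp add: sum_distrib_left mult.assoc)
  qed
  have L4: "(\<Sum>p\<in>S. \<Sum>q\<in>S. pmf P p * pmf P q * h p q)
     = (\<Sum>i<n. \<Sum>j<n. \<Sum>i'<n. \<Sum>j'<n. A i j * A i' j' * h (i,j) (i',j'))" for h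
  proof -
    have "(\<Sum>p\<in>S. \<Sum>q\<in>S. pmf P p * pmf P q * h p q) = (\<Sum>p\<in>S. pmf P p * (\<Sum>q\<in>S. pmf P q * h p q))"
      by (simp add: sum_distrib_left mult.assoc)
    also have "\<dots> = (\<Sum>p\<in>S. pmf P p * (\<Sum>i'<n. \<Sum>j'<n. A i' j' * h p (i',j')))" by (simp add: L0)
    also have "\<dots> = (\<Sum>i<n. \<Sum>j<n. A i j * (\<Sum>i'<n. \<Sum>j'<n. A i' j' * h (i,j) (i',j')))" by (rule L0)
    finally show ?thesis by (simp add: sum_distrib_left mult.assoc)
  qed
  define a where "a = (\<lambda>u. \<Sum>i'<n. Ar i' * norm (u - x i'))"
  define D where "D = (\<Sum>i<n. Ar i * a (x i))"
  have aF: "(\<Sum>q\<in>S. pmf P q * norm (u - x (fst q))) = a u" for u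
    unfolding a_def by (rule L1)
  have aS: "(\<Sum>q\<in>S. pmf P q * norm (u - x (snd q))) = a u" for u
    unfolding a_def by (rule L2)
  have DF: "(\<Sum>p\<in>S. pmf P p * a (x (fst p))) = D" unfolding D_def by (rule L1)
  have DS: "(\<Sum>p\<in>S. pmf P p * a (x (snd p))) = D" unfolding D_def by (rule L2)
  have Deq: "D = (\<Sum>i<n. \<Sum>i'<n. Ar i * Ar i' * d i i')"
    unfolding D_def a_def d_def by (simp add: sum_distrib_left mult.assoc)
  have ax: "a (x i) = (\<Sum>i'<n. Ar i' * d i i')" for i
    unfolding a_def d_def ..

  define f2 where "f2 = (\<Sum>i<n. \<Sum>i'<n. Ar i * Ar i' * (d i i')\<^sup>2)
              - 2 * (\<Sum>i<n. Ar i * (\<Sum>i'<n. Ar i' * d i i')\<^sup>2)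
              + (\<Sum>i<n. \<Sum>i'<n. Ar i * Ar i' * d i i')\<^sup>2"
  have XX: "dcov2 (map_pmf (\<lambda>(x,y). (x,x)) (attr_pmf n w x)) = f2"
  proof -
    have M: "map_pmf (\<lambda>(x,y). (x,x)) (attr_pmf n w x) = map_pmf (\<lambda>p. (x (fst p), x (fst p))) P"
      by (simp add: attr_pmf_def P_def map_pmf_comp case_prod_beta)
    show ?thesis
      unfolding M dcov2_fin[OF finS setP] Let_def
      unfolding dcov_alg[OF finS sum1]
      unfolding aF DF
      using LL1[of "\<lambda>i i'. d i i' * d i i'"] L1[of "\<lambda>i. a (x i) * a (x i)"]
      by (simp add: f2_def Deq ax power2_eq_square d_def mult.assoc)
  qed
  have YY: "dcov2 (map_pmf (\<lambda>(x,y). (y,y)) (attr_pmf n w x)) = f2"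
  proof -
    have M: "map_pmf (\<lambda>(x,y). (y,y)) (attr_pmf n w x) = map_pmf (\<lambda>p. (x (snd p), x (snd p))) P"
      by (simp add: attr_pmf_def P_def map_pmf_comp case_prod_beta)
    show ?thesis
      unfolding M dcov2_fin[OF finS setP] Let_def
      unfolding dcov_alg[OF finS sum1]
      unfolding aS DS
      using LL2[of "\<lambda>i i'. d i i' * d i i'"] L2[of "\<lambda>i. a (x i) * a (x i)"]
      by (simp add: f2_def Deq ax power2_eq_square d_def mult.assoc)
  qed
  have f2nn: "f2 \<ge> 0"
  proof -
    have M: "map_pmf (\<lambda>(x,y). (x,x)) (attr_pmf n w x) = map_pmf (\<lambda>p. (x (fst p), x (fst p))) P"
      by (simp add: attr_pmf_def P_def map_pmf_comp case_prod_beta)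
    show ?thesis using dcov2_self_nonneg[OF finS setP, of "\<lambda>p. x (fst p)"] XX M by simp
  qed
  define f1 where "f1 = (\<Sum>i'<n. \<Sum>j'<n. \<Sum>i<n. \<Sum>j<n. A i j * A i' j' * d i i' * d j j')
              - 2 * (\<Sum>i<n. \<Sum>j<n. A i j * (\<Sum>i'<n. Ar i' * d i i') * (\<Sum>j'<n. Ac j' * d j j'))
              + (\<Sum>i<n. \<Sum>i'<n. Ar i * Ar i' * d i i')\<^sup>2"
  have XY: "dcov2 (attr_pmf n w x) = f1"
  proof -
    have M: "attr_pmf n w x = map_pmf (\<lambda>p. (x (fst p), x (snd p))) P"
      unfolding attr_pmf_def P_def by (intro map_pmf_cong) auto
    have T: "(\<Sum>p\<in>S. \<Sum>q\<in>S. pmf P p * pmf P q * norm (x (fst p) - x (fst q)) * norm (x (snd p) - x (snd q)))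
      = (\<Sum>i'<n. \<Sum>j'<n. \<Sum>i<n. \<Sum>j<n. A i j * A i' j' * d i i' * d j j')"
    proof -
      have "(\<Sum>p\<in>S. \<Sum>q\<in>S. pmf P p * pmf P q * norm (x (fst p) - x (fst q)) * norm (x (snd p) - x (snd q)))
        = (\<Sum>p\<in>S. \<Sum>q\<in>S. pmf P p * pmf P q * (norm (x (fst p) - x (fst q)) * norm (x (snd p) - x (snd q))))"
        by (simp only: mult.assoc)
      also have "\<dots> = (\<Sum>i<n. \<Sum>j<n. \<Sum>i'<n. \<Sum>j'<n. A i j * A i' j' * (d i i' * d j j'))"
        unfolding L4 d_def by simp
      also have "\<dots> = (\<Sum>i'<n. \<Sum>j'<n. \<Sum>i<n. \<Sum>j<n. A i j * A i' j' * (d i i' * d j j'))"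
        by (rule sum_reorder4)
      finally show ?thesis by (simp only: mult.assoc)
    qed
    have acx: "(\<Sum>j'<n. Ac j' * d j j') = a (x j)" for j
      unfolding ax by (intro sum.cong refl) (simp add: AcAr)
    have K: "(\<Sum>p\<in>S. pmf P p * a (x (fst p)) * a (x (snd p)))
       = (\<Sum>i<n. \<Sum>j<n. A i j * (\<Sum>i'<n. Ar i' * d i i') * (\<Sum>j'<n. Ac j' * d j j'))"
      using L0[of "\<lambda>p. a (x (fst p)) * a (x (snd p))"] by (simp add: acx ax mult.assoc)
    show ?thesis
      unfolding M dcov2_fin[OF finS setP] Let_def
      unfolding dcov_alg[OF finS sum1]
      unfolding aF aS DF DS T K
      by (simp add: f1_def Deq power2_eq_square)
  qed
  have "dcor2 (attr_pmf n w x) = f1 / f2"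
    unfolding dcor2_def XY XX YY using f2nn by simp
  then show ?thesis
    unfolding Let_def f1_def f2_def A_def Ar_def Ac_def d_def .
qed


end
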